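(* Let $G$ be a special linear or symplectic algebraic group over an algebraically closed field, with natural module $V$ of dimension $n$. Let $C_1,\dots,C_e$ be conjugacy classes of $G$, $\Omega=C_1\times\dots\times C_e$, and let $\gamma_j$ be the dimension of the largest eigenspace on $V$ of an element of $C_j$. Then $\sum_{j=1}^e\gamma_j\leq n(e-1)$ if and only if there is a tuple $(x_1,\dots,x_e)\in\Omega$ such that no $1$-dimensional subspace of $V$ is fixed by all of $x_1,\dots,x_e$. *)

theory Defs
  imports "HOL-Analysis.Analysis" "HOL-Computational_Algebra.Polynomial"
begin

text \<open>Matrices over a field act on the natural module 'a^'n by (*v).
  The dimension n of the natural module is CARD('n).\<close>

definition SL_group :: "('a::field ^'n ^'n) set" where
  "SL_group = {A. det A = 1}"

text \<open>Nondegenerate alternating bilinear form, given by its Gram matrix J.\<close>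
definition alternating_nondeg :: "('a::field ^'n ^'n) \<Rightarrow> bool" where
  "alternating_nondeg J \<longleftrightarrow> transpose J = - J \<and> (\<forall>i. J $ i $ i = 0) \<and> det J \<noteq> 0"

text \<open>Symplectic group of the form with Gram matrix J.\<close>
definition Sp_group :: "('a::field ^'n ^'n) \<Rightarrow> ('a ^'n ^'n) set" where
  "Sp_group J = {A. transpose A ** J ** A = J}"

definition conj_class :: "('a::field ^'n ^'n) set \<Rightarrow> ('a ^'n ^'n) \<Rightarrow> ('a ^'n ^'n) set" where
  "conj_class G x = {g ** x ** matrix_inv g | g. g \<in> G}"

definition eigenspace :: "('a::field ^'n ^'n) \<Rightarrow> 'a \<Rightarrow> ('a ^'n) set" where
  "eigenspace A c = {v. A *v v = c *s v}"

text \<open>Dimension of the largest eigenspace of A on the natural module.\<close>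
definition max_eigenspace_dim :: "('a::field ^'n ^'n) \<Rightarrow> nat" where
  "max_eigenspace_dim A = Max {vec.dim (eigenspace A c) | c. True}"

text \<open>The 1-dimensional subspace L is fixed by A.\<close>
definition fixes_subspace :: "('a::field ^'n ^'n) \<Rightarrow> ('a ^'n) set \<Rightarrow> bool" where
  "fixes_subspace A L \<longleftrightarrow> (\<lambda>v. A *v v) ` L = L"

end

theory Submission
  imports Defs
begin

definition lf :: "'a::field^'n \<Rightarrow> 'a^'n \<Rightarrow> 'a" where
  "lf f y = (\<Sum>i\<in>UNIV. f$i * y$i)"

lemma lf_add2: "lf f (x + y) = lf f x + lf f y"
  by (simp add: lf_def algebra_simps sum.distrib)
lemma lf_diff2: "lf f (x - y) = lf f x - lf f y"
  by (simp add: lf_def algebra_simps sum_subtractf)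
lemma lf_scale2: "lf f (c *s y) = c * lf f y"
  by (simp add: lf_def algebra_simps sum_distrib_left)
lemma lf_comm: "lf f y = lf y f"
  by (simp add: lf_def mult.commute)
lemma lf_add1: "lf (x + y) f = lf x f + lf y f"
  by (simp add: lf_def algebra_simps sum.distrib)
lemma lf_scale1: "lf (c *s y) f = c * lf y f"
  by (simp add: lf_def algebra_simps sum_distrib_left)
lemma lf_zero2[simp]: "lf f 0 = 0" and lf_zero1[simp]: "lf 0 f = 0"
  by (simp_all add: lf_def)
lemma lf_transpose: "lf y (transpose A *v z) = lf (A *v y) z"
  unfolding lf_def matrix_vector_mult_def transpose_def
  by (simp add: sum_distrib_left sum_distrib_right mult_ac) (rule sum.swap)

definition tau :: "'a::field \<Rightarrow> 'a^'n \<Rightarrow> 'a^'n \<Rightarrow> 'a^'n^'n" where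
  "tau t v f = (\<chi> i j. (if i = j then 1 else 0) + t * v$i * f$j)"

lemma tau_apply: "tau t v f *v y = y + (t * lf f y) *s v"
proof -
  have "(\<Sum>j\<in>UNIV. ((if i = j then 1 else 0) + t * v$i * f$j) * y$j)
     = (\<Sum>j\<in>UNIV. (if i = j then 1 else 0) * y$j) + (\<Sum>j\<in>UNIV. t * v$i * f$j * y$j)" for i
    by (simp add: distrib_right sum.distrib)
  also have "\<dots> i = y$i + t * (\<Sum>j\<in>UNIV. f$j * y$j) * v$i" for i
  proof -
    have "(\<Sum>j\<in>UNIV. (if i = j then 1 else 0) * y$j) = (\<Sum>j\<in>UNIV. if i = j then y$j else 0)"
      by (rule sum.cong) auto
    also have "\<dots> = y$i" by simp
    finally show ?thesis by (simp add: sum_distrib_left mult_ac)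
  qed
  finally show ?thesis
    by (simp add: vec_eq_iff tau_def matrix_vector_mult_def lf_def)
qed

lemma infinite_alg_closed: "infinite (UNIV :: 'a::alg_closed_field set)"
proof
  assume fin: "finite (UNIV :: 'a set)"
  define p :: "'a poly" where "p = (\<Prod>a\<in>(UNIV::'a set). [:-a, 1:]) + 1"
  have dq: "degree (\<Prod>a\<in>(UNIV::'a set). [:-a, 1:]) = card (UNIV :: 'a set)"
    by (subst degree_prod_sum_eq) auto
  have "card (UNIV :: 'a set) > 0" using fin by (simp add: finite_UNIV_card_ge_0)
  hence "degree p > 0" unfolding p_def using dq
    by (metis degree_add_eq_left degree_1)
  then obtain x where "poly p x = 0" using alg_closed_imp_poly_has_root by blast
  moreover have "poly (\<Prod>a\<in>(UNIV::'a set). [:-a, 1:]) x = 0"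
    by (simp add: poly_prod fin)
  ultimately show False by (simp add: p_def)
qed

definition img :: "'a::field^'n^'m \<Rightarrow> ('a^'n) set \<Rightarrow> ('a^'m) set" where
  "img g U = (\<lambda>x. g *v x) ` U"

definition ssum :: "('a::field^'n) set \<Rightarrow> ('a^'n) set \<Rightarrow> ('a^'n) set" where
  "ssum W U = {x + y | x y. x \<in> W \<and> y \<in> U}"

lemma img_comp: "img (A ** B) U = img A (img B U)"
  by (auto simp: img_def image_image matrix_vector_mul_assoc)

lemma subspace_img: "vec.subspace U \<Longrightarrow> vec.subspace (img g U)"
  unfolding img_def by (rule vec.subspace_image)

lemma dim_img: assumes "invertible (g::'a::field^'n^'n)" shows "vec.dim (img g U) = vec.dim U"
  unfolding img_def
  by (rule vec.dim_image_eq) (use inj_matrix_vector_mult[OF assms] in \<open>auto intro: inj_on_subset\<close>)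

lemma subspace_ssum: "vec.subspace W \<Longrightarrow> vec.subspace U \<Longrightarrow> vec.subspace (ssum W U)"
  unfolding ssum_def by (rule vec.subspace_sums)

lemma dim_ssum_int: "vec.subspace W \<Longrightarrow> vec.subspace U \<Longrightarrow>
   vec.dim (ssum W U) + vec.dim (W \<inter> U) = vec.dim W + vec.dim U"
  unfolding ssum_def by (rule vec.dim_sums_Int)

lemma dim_le_n: "vec.dim (S::('a::field^'n) set) \<le> CARD('n)"
  using vec.dim_subset_UNIV[of S] by (simp add: vec.dimension_def card_cart_basis)

lemma dim_UNIV_n[simp]: "vec.dim (UNIV::('a::field^'n) set) = CARD('n)"
  by (simp add: card_cart_basis)

lemma full_dim_UNIV: assumes "vec.subspace (S::('a::field^'n) set)" "vec.dim S = CARD('n)"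
  shows "S = UNIV"
proof -
  have "vec.span S = UNIV" using assms(2) vec.dim_eq_full[of S] by (simp add: vec.dimension_def card_cart_basis)
  thus ?thesis using vec.span_eq_iff[of S] assms(1) by simp
qed

lemma ssum_sub1: "vec.subspace U \<Longrightarrow> W \<subseteq> ssum W U"
  unfolding ssum_def by (force dest: vec.subspace_0)
lemma ssum_sub2: "vec.subspace W \<Longrightarrow> U \<subseteq> ssum W U"
  unfolding ssum_def by (force dest: vec.subspace_0)

lemma avoid_union:
  fixes S :: "('a::field^'n) set set"
  assumes inf: "infinite (UNIV::'a set)" and "finite S" and "\<forall>s\<in>S. vec.subspace s \<and> s \<noteq> UNIV"
  shows "\<exists>v. \<forall>s\<in>S. v \<notin> s"
  using assms(2,3)
proof (induction S rule: finite_induct)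
  case empty thus ?case by auto
next
  case (insert s S)
  then obtain v where v: "\<forall>s'\<in>S. v \<notin> s'" by auto
  have ss: "vec.subspace s" "s \<noteq> UNIV" using insert by auto
  show ?case
  proof (cases "v \<in> s")
    case False thus ?thesis using v by auto
  next
    case True
    obtain w where w: "w \<notin> s" using ss by auto
    define B where "B s' = {c. v + c *s w \<in> s'}" for s'
    have Bsub: "\<exists>c0. B s' \<subseteq> {c0}" if "s' \<in> S" for s'
    proof (cases "B s' = {}")
      case True thus ?thesis by auto
    next
      case False
      then obtain c1 where c1: "c1 \<in> B s'" by auto
      have "B s' \<subseteq> {c1}"
      proof
        fix c2 assume c2: "c2 \<in> B s'"
        show "c2 \<in> {c1}"
        proof (rule ccontr)
          assume ne: "c2 \<notin> {c1}"
          have sub: "vec.subspace s'" using insert that by auto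
          have "(v + c1 *s w) - (v + c2 *s w) \<in> s'"
            using c1 c2 sub unfolding B_def by (intro vec.subspace_diff) auto
          moreover have "(v + c1 *s w) - (v + c2 *s w) = (c1 - c2) *s w"
            by (simp add: vec.scale_left_diff_distrib)
          ultimately have "(c1 - c2) *s w \<in> s'" by simp
          hence "(1 / (c1 - c2)) *s ((c1 - c2) *s w) \<in> s'" using sub vec.subspace_scale by blast
          
          moreover have "(1 / (c1 - c2)) *s ((c1 - c2) *s w) = w" using ne by (subst vector_smult_assoc) simp
          ultimately have "w \<in> s'" by simp
          hence "c1 *s w \<in> s'" using sub vec.subspace_scale by blast
          hence "(v + c1 *s w) - c1 *s w \<in> s'" using c1 sub unfolding B_def by (intro vec.subspace_diff) auto
          hence "v \<in> s'" by simp
          thus False using v that by auto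
        qed
      qed
      thus ?thesis by blast
    qed
    have "finite (B s')" if "s' \<in> S" for s'
      using Bsub[OF that] by (meson finite.emptyI finite_insert finite_subset)
    hence "finite (insert 0 (\<Union>s'\<in>S. B s'))" using insert(1) by auto
    then obtain c where c: "c \<notin> insert 0 (\<Union>s'\<in>S. B s')"
      using inf by (meson ex_new_if_finite)
    have "v + c *s w \<notin> s"
    proof
      assume "v + c *s w \<in> s"
      hence "(v + c *s w) - v \<in> s" using True ss by (intro vec.subspace_diff) auto
      hence "(1 / c) *s (c *s w) \<in> s" using ss(1) vec.subspace_scale by (metis add_diff_cancel_left')
      moreover have "(1 / c) *s (c *s w) = w" using c by (subst vector_smult_assoc) simp
      ultimately show False using w by simp
    qed
    moreover have "\<forall>s'\<in>S. v + c *s w \<notin> s'" using c by (auto simp: B_def)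
    ultimately show ?thesis by auto
  qed
qed

lemma subspace_ker_lf: "vec.subspace U \<Longrightarrow> vec.subspace {u\<in>U. lf f u = 0}"
  unfolding vec.subspace_def by (auto simp: lf_add2 lf_scale2)

lemma bad_pair:
  assumes W: "vec.subspace W" and U: "vec.subspace U" and v: "v \<notin> ssum W U" and t: "t \<noteq> 0"
  shows "W \<inter> img (tau t v f) U \<subseteq> {y\<in>W \<inter> U. lf f y = 0}"
proof
  fix z assume z: "z \<in> W \<inter> img (tau t v f) U"
  then obtain y where y: "y \<in> U" "z = y + (t * lf f y) *s v"
    by (auto simp: img_def tau_apply)
  have "t * lf f y = 0"
  proof (rule ccontr)
    assume ne: "t * lf f y \<noteq> 0"
    have zW: "z \<in> W" using z by auto
    have "(-1) *s y \<in> U" by (rule vec.subspace_scale[OF U y(1)])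
    hence "z + (-1) *s y \<in> ssum W U" unfolding ssum_def using zW by blast
    hence "(1 / (t * lf f y)) *s (z + (-1) *s y) \<in> ssum W U"
      using vec.subspace_scale subspace_ssum[OF W U] by blast
    moreover have "(1 / (t * lf f y)) *s (z + (-1) *s y) = v"
      using ne y(2) by (simp add: vector_smult_assoc)
    ultimately show False using v by simp
  qed
  thus "z \<in> {y\<in>W \<inter> U. lf f y = 0}" using y z t by auto
qed

lemma good_pair:
  assumes W: "vec.subspace W" and U: "vec.subspace U" and full: "ssum W U = UNIV"
  shows "\<exists>t0. \<forall>t. t \<noteq> t0 \<longrightarrow> ssum W (img (tau t v f) U) = UNIV"
proof (cases "\<forall>u\<in>U. lf f u = 0")
  case True
  hence "img (tau t v f) U = U" for t
    by (force simp: img_def tau_apply)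
  thus ?thesis using full by auto
next
  case False
  then obtain u1 where u1: "u1 \<in> U" "lf f u1 \<noteq> 0" by auto
  define u0 where "u0 = (1 / lf f u1) *s u1"
  have u0: "u0 \<in> U" "lf f u0 = 1" using u1 U by (auto simp: u0_def lf_scale2 vec.subspace_scale)
  define K where "K = {u\<in>U. lf f u = 0}"
  have K: "vec.subspace K" unfolding K_def by (rule subspace_ker_lf[OF U])
  define Y where "Y = ssum W K"
  have Y: "vec.subspace Y" unfolding Y_def by (rule subspace_ssum[OF W K])
  have dec: "\<exists>y\<in>Y. \<exists>s. z = y + s *s u0" for z
  proof -
    have "z \<in> ssum W U" using full by auto
    then obtain w u where wu: "w \<in> W" "u \<in> U" "z = w + u" by (auto simp: ssum_def)
    have m1: "(- lf f u) *s u0 \<in> U" using vec.subspace_scale[OF U u0(1)] .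
    have "u + (- lf f u) *s u0 \<in> U" using vec.subspace_add[OF U wu(2) m1] .
    moreover have "lf f (u + (- lf f u) *s u0) = 0" by (simp add: lf_add2 lf_diff2 lf_scale2 u0)
    ultimately have "u + (- lf f u) *s u0 \<in> K" unfolding K_def by blast
    hence "w + (u + (- lf f u) *s u0) \<in> Y" unfolding Y_def ssum_def using wu by blast
    moreover have "z = (w + (u + (- lf f u) *s u0)) + (lf f u) *s u0"
      using wu by (simp add: algebra_simps vector_sadd_rdistrib)
    ultimately show ?thesis by blast
  qed
  have Ysub: "Y \<subseteq> ssum W (img (tau t v f) U)" for t
  proof
    fix z assume "z \<in> Y"
    then obtain w k where wk: "w \<in> W" "k \<in> K" "z = w + k" by (auto simp: Y_def ssum_def)
    have "k \<in> img (tau t v f) U" using wk(2) unfolding K_def img_def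
      by (auto simp: tau_apply intro!: image_eqI[of _ _ k])
    thus "z \<in> ssum W (img (tau t v f) U)" using wk by (auto simp: ssum_def)
  qed
  have Sm: "vec.subspace (ssum W (img (tau t v f) U))" for t
    by (rule subspace_ssum[OF W subspace_img[OF U]])
  have tu0: "u0 + t *s v \<in> img (tau t v f) U" for t
    using u0 unfolding img_def by (auto simp: tau_apply intro!: image_eqI[of _ _ u0])
  show ?thesis
  proof (cases "u0 \<in> Y")
    case True
    have "Y = UNIV"
    proof -
      have "z \<in> Y" for z
        using dec[of z] True Y by (auto intro: vec.subspace_add vec.subspace_scale)
      thus ?thesis by auto
    qed
    thus ?thesis using Ysub by blast
  next
    case False
    define t0 where "t0 = (SOME t1. u0 + t1 *s v \<in> Y)"
    have notin: "u0 + t *s v \<notin> Y" if "t \<noteq> t0" for t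
    proof
      assume A: "u0 + t *s v \<in> Y"
      hence B: "u0 + t0 *s v \<in> Y" unfolding t0_def by (rule someI)
      have "(u0 + t *s v) - (u0 + t0 *s v) \<in> Y" using A B Y by (intro vec.subspace_diff) auto
      moreover have "(u0 + t *s v) - (u0 + t0 *s v) = (t - t0) *s v"
        by (simp add: vec.scale_left_diff_distrib)
      ultimately have "(1 / (t - t0)) *s ((t - t0) *s v) \<in> Y" using Y vec.subspace_scale by metis
      moreover have "(1 / (t - t0)) *s ((t - t0) *s v) = v" using that by (subst vector_smult_assoc) simp
      ultimately have "v \<in> Y" by simp
      hence "t *s v \<in> Y" using Y vec.subspace_scale by blast
      hence "(u0 + t *s v) - t *s v \<in> Y" using A Y by (intro vec.subspace_diff) auto
      thus False using False by simp
    qed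
    have "\<forall>t. t \<noteq> t0 \<longrightarrow> ssum W (img (tau t v f) U) = UNIV"
    proof (intro allI impI)
      fix t assume tt: "t \<noteq> t0"
      obtain y' s' where y': "y' \<in> Y" "u0 + t *s v = y' + s' *s u0" using dec by blast
      have s': "s' \<noteq> 0" using y' notin[OF tt] by auto
      have "z \<in> ssum W (img (tau t v f) U)" for z
      proof -
        obtain y s where ys: "y \<in> Y" "z = y + s *s u0" using dec by blast
        have eq: "z = y + (s / s') *s (u0 + t *s v) + (- (s / s')) *s y'"
          using ys y' s' by (simp add: algebra_simps vector_smult_assoc vector_sadd_rdistrib)
        have "y \<in> ssum W (img (tau t v f) U)" "y' \<in> ssum W (img (tau t v f) U)"
          using ys y' Ysub by auto
        moreover have "u0 + t *s v \<in> ssum W (img (tau t v f) U)"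
          using tu0 ssum_sub2[OF W] by blast
        ultimately have a: "y \<in> ssum W (img (tau t v f) U)"
            "(s / s') *s (u0 + t *s v) \<in> ssum W (img (tau t v f) U)"
            "(- (s / s')) *s y' \<in> ssum W (img (tau t v f) U)"
          using vec.subspace_scale[OF Sm[of t]] by blast+
        show ?thesis unfolding eq
          by (rule vec.subspace_add[OF Sm vec.subspace_add[OF Sm a(1) a(2)] a(3)])
      qed
      thus "ssum W (img (tau t v f) U) = UNIV" by auto
    qed
    thus ?thesis by blast
  qed
qed

lemma subspace_span_eq: "vec.subspace S \<Longrightarrow> vec.span S = S"
  by (simp add: vec.span_eq_iff)

lemma step_lemma:
  fixes H :: "('a::field^'n^'n) set" and P :: "(('a^'n) set \<times> ('a^'n) set) set"
  assumes inf: "infinite (UNIV::'a set)"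
    and H1: "mat 1 \<in> H" and Hmul: "\<forall>a\<in>H. \<forall>b\<in>H. a ** b \<in> H" and Hinv: "\<forall>a\<in>H. invertible a"
    and Htau: "\<forall>x S. x \<noteq> 0 \<longrightarrow> finite S \<longrightarrow> (\<forall>s\<in>S. vec.subspace s \<and> s \<noteq> UNIV) \<longrightarrow> (\<exists>s\<in>S. x \<in> s)
        \<longrightarrow> (\<exists>v f. (\<forall>s\<in>S. v \<notin> s) \<and> lf f x \<noteq> 0 \<and> (\<forall>t. tau t v f \<in> H))"
    and finP: "finite P" and subP: "\<forall>p\<in>P. vec.subspace (fst p) \<and> vec.subspace (snd p)"
  shows "\<exists>g\<in>H. \<forall>p\<in>P. fst p \<inter> img g (snd p) = {0} \<or> ssum (fst p) (img g (snd p)) = UNIV"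
proof -
  define \<Phi> where "\<Phi> g = (\<Sum>p\<in>P. vec.dim (fst p \<inter> img g (snd p)))" for g
  obtain g where g: "g \<in> H" and gmin: "\<forall>h. h \<in> H \<longrightarrow> \<Phi> g \<le> \<Phi> h"
    using ex_has_least_nat[of "\<lambda>g. g \<in> H" "mat 1" \<Phi>] H1 by blast
  show ?thesis
  proof (rule ccontr)
    assume nt: "\<not> ?thesis"
    define Q where "Q p \<longleftrightarrow> (fst p \<inter> img g (snd p) = {0} \<or> ssum (fst p) (img g (snd p)) = UNIV)" for p
    have "\<not> (\<forall>p\<in>P. Q p)"
    proof (rule notI)
      assume a: "\<forall>p\<in>P. Q p"
      have "\<exists>g\<in>H. \<forall>p\<in>P. fst p \<inter> img g (snd p) = {0} \<or> ssum (fst p) (img g (snd p)) = UNIV"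
      proof (rule bexI[OF _ g])
        show "\<forall>p\<in>P. fst p \<inter> img g (snd p) = {0} \<or> ssum (fst p) (img g (snd p)) = UNIV"
          using a unfolding Q_def .
      qed
      thus False using nt by contradiction
    qed
    then obtain p0 where p0': "p0 \<in> P" "\<not> Q p0" by blast
    hence p0: "p0 \<in> P" "fst p0 \<inter> img g (snd p0) \<noteq> {0}"
      "ssum (fst p0) (img g (snd p0)) \<noteq> UNIV" unfolding Q_def by auto
    have sub0: "vec.subspace (fst p0 \<inter> img g (snd p0))"
      using subP p0(1) by (intro vec.subspace_inter subspace_img) auto
    obtain x where x: "x \<in> fst p0 \<inter> img g (snd p0)" "x \<noteq> 0"
      using p0(2) vec.subspace_0[OF sub0] by blast
    define Pb where "Pb = {p\<in>P. ssum (fst p) (img g (snd p)) \<noteq> UNIV}"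
    define Pg where "Pg = {p\<in>P. ssum (fst p) (img g (snd p)) = UNIV}"
    define S where "S = (\<lambda>p. ssum (fst p) (img g (snd p))) ` Pb"
    have finS: "finite S" unfolding S_def Pb_def using finP by auto
    have subS: "\<forall>s\<in>S. vec.subspace s \<and> s \<noteq> UNIV"
      unfolding S_def Pb_def using subP by (auto intro!: subspace_ssum subspace_img)
    have xS: "\<exists>s\<in>S. x \<in> s"
    proof
      show "ssum (fst p0) (img g (snd p0)) \<in> S" unfolding S_def Pb_def using p0 by auto
      show "x \<in> ssum (fst p0) (img g (snd p0))"
        using x ssum_sub1[OF subspace_img, of "snd p0"] subP p0(1) by blast
    qed
    obtain v f where vf: "\<forall>s\<in>S. v \<notin> s" "lf f x \<noteq> 0" "\<forall>t. tau t v f \<in> H"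
      using mp[OF mp[OF mp[OF mp[OF spec[OF spec[OF Htau, of x], of S] x(2)] finS] subS] xS] by blast
    have "\<forall>p\<in>Pg. \<exists>t0. \<forall>t. t \<noteq> t0 \<longrightarrow> ssum (fst p) (img (tau t v f) (img g (snd p))) = UNIV"
      unfolding Pg_def using subP by (auto intro!: good_pair subspace_img)
    then obtain T where T: "\<forall>p\<in>Pg. \<forall>t. t \<noteq> T p \<longrightarrow> ssum (fst p) (img (tau t v f) (img g (snd p))) = UNIV"
      by metis
    have "finite (insert 0 (T ` Pg))" unfolding Pg_def using finP by auto
    then obtain t where t: "t \<notin> insert 0 (T ` Pg)" using inf by (meson ex_new_if_finite)
    define h where "h = tau t v f ** g"
    have hH: "h \<in> H" unfolding h_def using vf(3) g Hmul by auto
    have tinv: "invertible (tau t v f)" using vf(3) Hinv by auto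
    have le: "vec.dim (fst p \<inter> img h (snd p)) \<le> vec.dim (fst p \<inter> img g (snd p))" if p: "p \<in> P" for p
    proof -
      have W: "vec.subspace (fst p)" and U: "vec.subspace (img g (snd p))"
        using subP p by (auto intro: subspace_img)
      have ih: "img h (snd p) = img (tau t v f) (img g (snd p))" unfolding h_def by (rule img_comp)
      show ?thesis
      proof (cases "p \<in> Pg")
        case True
        hence full: "ssum (fst p) (img (tau t v f) (img g (snd p))) = UNIV" using T t by auto
        have full0: "ssum (fst p) (img g (snd p)) = UNIV" using True Pg_def by auto
        have "vec.dim (ssum (fst p) (img (tau t v f) (img g (snd p)))) + vec.dim (fst p \<inter> img (tau t v f) (img g (snd p)))
            = vec.dim (fst p) + vec.dim (img (tau t v f) (img g (snd p)))"
          by (rule dim_ssum_int[OF W subspace_img[OF U]])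
        moreover have "vec.dim (ssum (fst p) (img g (snd p))) + vec.dim (fst p \<inter> img g (snd p))
            = vec.dim (fst p) + vec.dim (img g (snd p))"
          by (rule dim_ssum_int[OF W U])
        moreover have "vec.dim (img (tau t v f) (img g (snd p))) = vec.dim (img g (snd p))"
          by (rule dim_img[OF tinv])
        ultimately show ?thesis using full full0 ih by simp
      next
        case False
        hence "ssum (fst p) (img g (snd p)) \<in> S" unfolding S_def Pb_def Pg_def using p by auto
        hence "v \<notin> ssum (fst p) (img g (snd p))" using vf(1) by auto
        hence "fst p \<inter> img h (snd p) \<subseteq> fst p \<inter> img g (snd p)"
          using bad_pair[OF W U _ , of v t f] t ih by auto
        thus ?thesis by (rule vec.dim_subset)
      qed
    qed
    have lt: "vec.dim (fst p0 \<inter> img h (snd p0)) < vec.dim (fst p0 \<inter> img g (snd p0))"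
    proof -
      have W: "vec.subspace (fst p0)" and U: "vec.subspace (img g (snd p0))"
        using subP p0 by (auto intro: subspace_img)
      have ih: "img h (snd p0) = img (tau t v f) (img g (snd p0))" unfolding h_def by (rule img_comp)
      have "ssum (fst p0) (img g (snd p0)) \<in> S" unfolding S_def Pb_def using p0 by auto
      hence "v \<notin> ssum (fst p0) (img g (snd p0))" using vf(1) by auto
      hence s1: "fst p0 \<inter> img h (snd p0) \<subseteq> {y \<in> fst p0 \<inter> img g (snd p0). lf f y = 0}"
        using bad_pair[OF W U _ , of v t f] t ih by auto
      have s2: "{y \<in> fst p0 \<inter> img g (snd p0). lf f y = 0} \<subset> fst p0 \<inter> img g (snd p0)"
        using x vf(2) by auto
      have sp1: "vec.span {y \<in> fst p0 \<inter> img g (snd p0). lf f y = 0} = {y \<in> fst p0 \<inter> img g (snd p0). lf f y = 0}"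
        by (rule subspace_span_eq[OF subspace_ker_lf[OF sub0]])
      have sp2: "vec.span (fst p0 \<inter> img g (snd p0)) = fst p0 \<inter> img g (snd p0)"
        by (rule subspace_span_eq[OF sub0])
      have "vec.dim {y \<in> fst p0 \<inter> img g (snd p0). lf f y = 0} < vec.dim (fst p0 \<inter> img g (snd p0))"
        by (rule vec.dim_psubset, unfold sp1 sp2, rule s2)
      moreover have "vec.dim (fst p0 \<inter> img h (snd p0)) \<le> vec.dim {y \<in> fst p0 \<inter> img g (snd p0). lf f y = 0}"
        using s1 by (rule vec.dim_subset)
      ultimately show ?thesis by simp
    qed
    have "\<Phi> h < \<Phi> g" unfolding \<Phi>_def
      by (rule sum_strict_mono_ex1[OF finP]) (use le lt p0(1) in auto)
    thus False using gmin hH by fastforce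
  qed
qed

lemma subspace_Icap: "(\<forall>j<e. vec.subspace (A j)) \<Longrightarrow> vec.subspace {x. \<forall>j<e. x \<in> A j}"
  unfolding vec.subspace_def by auto

lemma core_lemma:
  fixes H :: "('a::field^'n^'n) set" and F :: "nat \<Rightarrow> ('a^'n) set set" and d :: "nat \<Rightarrow> nat"
  assumes step: "\<forall>P. finite P \<longrightarrow> (\<forall>p\<in>P. vec.subspace (fst p) \<and> vec.subspace (snd p)) \<longrightarrow>
       (\<exists>g\<in>H. \<forall>p\<in>P. fst p \<inter> img g (snd p) = {0} \<or> ssum (fst p) (img g (snd p)) = UNIV)"
    and Hinv: "\<forall>a\<in>H. invertible a"
    and finF: "\<forall>j. finite (F j)" and subF: "\<forall>j. \<forall>U\<in>F j. vec.subspace U \<and> vec.dim U \<le> d j"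
    and dn: "\<forall>j. d j \<le> CARD('n)"
  shows "\<exists>g. (\<forall>j<e. g j \<in> H) \<and> (\<forall>U. (\<forall>j<e. U j \<in> F j) \<longrightarrow>
     int (vec.dim {x. \<forall>j<e. x \<in> img (g j) (U j)}) \<le> max 0 ((\<Sum>j<e. int (d j)) - int CARD('n) * (int e - 1)))"
proof (induction e)
  case 0
  show ?case by (simp add: card_cart_basis)
next
  case (Suc e)
  then obtain g where gH: "\<forall>j<e. g j \<in> H" and gb: "\<forall>U. (\<forall>j<e. U j \<in> F j) \<longrightarrow>
     int (vec.dim {x. \<forall>j<e. x \<in> img (g j) (U j)}) \<le> max 0 ((\<Sum>j<e. int (d j)) - int CARD('n) * (int e - 1))"
    by blast
  define I where "I U = {x. \<forall>j<e. x \<in> img (g j) (U j)}" for U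
  have subI: "vec.subspace (I U)" if "\<forall>j<e. U j \<in> F j" for U
    unfolding I_def using that subF by (intro subspace_Icap) (auto intro: subspace_img)
  define P where "P = (I ` (Pi\<^sub>E {..<e} F)) \<times> F e"
  have finP: "finite P" unfolding P_def using finF by (auto intro!: finite_PiE)
  have subP: "\<forall>p\<in>P. vec.subspace (fst p) \<and> vec.subspace (snd p)"
    unfolding P_def using subF subI by (auto simp: PiE_def Pi_def)
  obtain h where hH: "h \<in> H" and hP: "\<forall>p\<in>P. fst p \<inter> img h (snd p) = {0} \<or> ssum (fst p) (img h (snd p)) = UNIV"
    using mp[OF mp[OF spec[OF step, of P] finP] subP] by metis
  define g' where "g' = g(e := h)"
  have "\<forall>j<Suc e. g' j \<in> H" using gH hH by (auto simp: g'_def less_Suc_eq)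
  moreover have "int (vec.dim {x. \<forall>j<Suc e. x \<in> img (g' j) (U j)}) \<le> max 0 ((\<Sum>j<Suc e. int (d j)) - int CARD('n) * (int (Suc e) - 1))"
    if U: "\<forall>j<Suc e. U j \<in> F j" for U
  proof -
    have Ue: "\<forall>j<e. U j \<in> F j" using U by auto
    have eq: "{x. \<forall>j<Suc e. x \<in> img (g' j) (U j)} = I U \<inter> img h (U e)"
      by (auto simp: I_def g'_def less_Suc_eq)
    have IU: "I U = I (restrict U {..<e})" by (auto simp: I_def)
    have "(I U, U e) \<in> P" unfolding P_def IU using U by auto
    hence alt: "I U \<inter> img h (U e) = {0} \<or> ssum (I U) (img h (U e)) = UNIV"
      using bspec[OF hP] by (metis fst_conv snd_conv)
    have bI: "int (vec.dim (I U)) \<le> max 0 ((\<Sum>j<e. int (d j)) - int CARD('n) * (int e - 1))"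
      using gb Ue unfolding I_def by blast
    have sU: "vec.subspace (U e)" and dU: "vec.dim (U e) \<le> d e" using subF U by auto
    have dh: "vec.dim (img h (U e)) = vec.dim (U e)" using dim_img Hinv hH by blast
    have sumeq: "(\<Sum>j<Suc e. int (d j)) = (\<Sum>j<e. int (d j)) + int (d e)" by simp
    show ?thesis
      using alt
    proof
      assume "I U \<inter> img h (U e) = {0}"
      thus ?thesis unfolding eq by simp
    next
      assume full: "ssum (I U) (img h (U e)) = UNIV"
      have "vec.dim (ssum (I U) (img h (U e))) + vec.dim (I U \<inter> img h (U e)) = vec.dim (I U) + vec.dim (img h (U e))"
        by (rule dim_ssum_int[OF subI[OF Ue] subspace_img[OF sU]])
      hence "int (vec.dim (I U \<inter> img h (U e))) = int (vec.dim (I U)) + int (vec.dim (U e)) - int CARD('n)"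
        using full dh by (simp add: card_cart_basis)
      note E1 = this
      have h1: "int CARD('n) * (int (Suc e) - 1) = int CARD('n) * (int e - 1) + int CARD('n)"
        by (simp add: algebra_simps)
      have de: "d e \<le> CARD('n)" using dn by blast
      have "int (vec.dim (I U \<inter> img h (U e))) \<le> max 0 ((\<Sum>j<e. int (d j)) - int CARD('n) * (int e - 1)) + int (d e) - int CARD('n)"
        using E1 bI dU by linarith
      also have "\<dots> \<le> max 0 ((\<Sum>j<e. int (d j)) + int (d e) - (int CARD('n) * (int e - 1) + int CARD('n)))"
        using de unfolding max_def by auto
      finally show ?thesis unfolding eq sumeq h1 .
    qed
  qed
  ultimately show ?case by blast
qed

lemma eig_indep:
  fixes A :: "'a::field^'n^'n"
  assumes "finite L" "\<forall>l\<in>L. A *v w l = l *s w l"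
  shows "\<forall>a. (\<Sum>l\<in>L. a l *s w l) = 0 \<longrightarrow> (\<forall>l\<in>L. a l *s w l = 0)"
  using assms
proof (induction L rule: finite_induct)
  case empty thus ?case by simp
next
  case (insert m L)
  show ?case
  proof (intro allI impI)
    fix a assume s0: "(\<Sum>l\<in>insert m L. a l *s w l) = 0"
    have s1: "a m *s w m + (\<Sum>l\<in>L. a l *s w l) = 0" using s0 insert(1,2) by simp
    have "A *v (a m *s w m + (\<Sum>l\<in>L. a l *s w l)) = 0" using s1 by simp
    hence s2: "(a m * m) *s w m + (\<Sum>l\<in>L. (a l * l) *s w l) = 0"
      using insert(4) by (simp add: vec.sum matrix_vector_right_distrib vector_scalar_commute vector_smult_assoc mult.commute)
    have s3: "(a m * m) *s w m + (\<Sum>l\<in>L. (a l * m) *s w l) = 0"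
      using arg_cong[OF s1, of "\<lambda>z. m *s z"]
      by (simp add: vector_add_ldistrib vec.scale_sum_right vector_smult_assoc mult.commute)
    have "(\<Sum>l\<in>L. (a l * (l - m)) *s w l) = 0"
    proof -
      have "(\<Sum>l\<in>L. (a l * (l - m)) *s w l) = (\<Sum>l\<in>L. (a l * l) *s w l) - (\<Sum>l\<in>L. (a l * m) *s w l)"
        by (simp add: algebra_simps vec.scale_left_diff_distrib sum_subtractf)
      also have "\<dots> = ((a m * m) *s w m + (\<Sum>l\<in>L. (a l * l) *s w l)) - ((a m * m) *s w m + (\<Sum>l\<in>L. (a l * m) *s w l))"
        by simp
      also have "\<dots> = 0" using s2 s3 by simp
      finally show ?thesis .
    qed
    note sum0 = this
    have e4: "\<forall>l\<in>L. A *v w l = l *s w l" using insert(4) by auto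
    have "\<forall>l\<in>L. (a l * (l - m)) *s w l = 0"
      using mp[OF spec[OF insert(3)[OF e4], of "\<lambda>l. a l * (l - m)"] sum0] .
    note zz = this
    have z: "\<forall>l\<in>L. a l *s w l = 0"
    proof
      fix l assume l: "l \<in> L"
      hence lm: "l - m \<noteq> 0" using insert(2) by auto
      have "a l *s w l = (1 / (l - m)) *s ((a l * (l - m)) *s w l)" using lm by (simp add: vector_smult_assoc)
      also have "\<dots> = 0" using bspec[OF zz l] lm by auto
      finally show "a l *s w l = 0" .
    qed
    hence "(\<Sum>l\<in>L. a l *s w l) = 0" by (rule sum.neutral)
    hence "a m *s w m = 0" using s1 by simp
    thus "\<forall>l\<in>insert m L. a l *s w l = 0" using z by auto
  qed
qed

lemma finite_eigenvalues:
  fixes A :: "'a::field^'n^'n"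
  shows "finite {l. eigenspace A l \<noteq> {0}}"
proof (rule ccontr)
  assume inf: "infinite {l. eigenspace A l \<noteq> {0}}"
  obtain L where L: "finite L" "card L = Suc CARD('n)" "L \<subseteq> {l. eigenspace A l \<noteq> {0}}"
    using infinite_arbitrarily_large[OF inf] by blast
  have "\<forall>l\<in>L. \<exists>x. x \<noteq> 0 \<and> A *v x = l *s x"
  proof
    fix l assume "l \<in> L"
    hence "eigenspace A l \<noteq> {0}" using L by auto
    moreover have "0 \<in> eigenspace A l" by (simp add: eigenspace_def)
    ultimately show "\<exists>x. x \<noteq> 0 \<and> A *v x = l *s x" unfolding eigenspace_def by blast
  qed
  then obtain w where w: "\<forall>l\<in>L. w l \<noteq> 0 \<and> A *v w l = l *s w l" by metis
  have inj: "inj_on w L"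
  proof
    fix l1 l2 assume "l1 \<in> L" "l2 \<in> L" "w l1 = w l2"
    hence "l1 *s w l1 = l2 *s w l1" using w by metis
    hence "(l1 - l2) *s w l1 = 0" by (simp add: vec.scale_left_diff_distrib)
    thus "l1 = l2" using w \<open>l1 \<in> L\<close> by simp
  qed
  have ind: "vec.independent (w ` L)"
    unfolding vec.independent_explicit
  proof (intro conjI allI impI)
    show "finite (w ` L)" using L by simp
    fix c assume "(\<Sum>v\<in>w ` L. c v *s v) = 0"
    hence "(\<Sum>l\<in>L. c (w l) *s w l) = 0" by (simp add: sum.reindex[OF inj])
    moreover have e: "\<forall>l\<in>L. A *v w l = l *s w l" using w by blast
    ultimately have "\<forall>l\<in>L. c (w l) *s w l = 0" using eig_indep[OF L(1) e, rule_format, of "\<lambda>l. c (w l)"] by blast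
    thus "\<forall>v\<in>w ` L. c v = 0" using w by auto
  qed
  have "card (w ` L) \<le> vec.dim (w ` L)" using vec.independent_bound_general[OF ind] by simp
  also have "\<dots> \<le> CARD('n)" by (rule dim_le_n)
  finally show False using card_image[OF inj] L(2) by simp
qed

lemma inv_props: assumes "invertible (g::'a::field^'n^'n)"
  shows "g ** matrix_inv g = mat 1" "matrix_inv g ** g = mat 1"
proof -
  have "\<exists>A'. g ** A' = mat 1 \<and> A' ** g = mat 1" using assms by (simp add: invertible_def)
  hence "g ** matrix_inv g = mat 1 \<and> matrix_inv g ** g = mat 1"
    unfolding matrix_inv_def by (rule someI_ex)
  thus "g ** matrix_inv g = mat 1" "matrix_inv g ** g = mat 1" by auto
qed

lemma eigenspace_conj:
  assumes "invertible (g::'a::field^'n^'n)"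
  shows "eigenspace (g ** c ** matrix_inv g) m = img g (eigenspace c m)"
proof -
  note I = inv_props[OF assms]
  have "y \<in> img g (eigenspace c m)" if "y \<in> eigenspace (g ** c ** matrix_inv g) m" for y
  proof -
    have "g *v (c *v (matrix_inv g *v y)) = m *s y" using that
      by (simp add: eigenspace_def matrix_vector_mul_assoc matrix_mul_assoc)
    note h = this
    have cancel: "\<And>z. matrix_inv g *v (g *v z) = z" by (simp add: matrix_vector_mul_assoc I)
    have "c *v (matrix_inv g *v y) = matrix_inv g *v (g *v (c *v (matrix_inv g *v y)))"
      by (simp only: cancel)
    also have "\<dots> = matrix_inv g *v (m *s y)" using h by simp
    also have "\<dots> = m *s (matrix_inv g *v y)" by (simp add: vector_scalar_commute)
    finally have "c *v (matrix_inv g *v y) = m *s (matrix_inv g *v y)" .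
    moreover have "y = g *v (matrix_inv g *v y)" by (simp add: matrix_vector_mul_assoc I)
    ultimately show ?thesis unfolding img_def eigenspace_def by blast
  qed
  moreover have "y \<in> eigenspace (g ** c ** matrix_inv g) m" if yin: "y \<in> img g (eigenspace c m)" for y
  proof -
    obtain w where w: "c *v w = m *s w" "y = g *v w" using yin unfolding img_def eigenspace_def by blast
    have "(g ** c ** matrix_inv g) *v y = g *v (c *v ((matrix_inv g ** g) *v w))"
      by (simp add: w matrix_vector_mul_assoc matrix_mul_assoc)
    also have "\<dots> = m *s y" by (simp add: I w vector_scalar_commute)
    finally show ?thesis by (simp add: eigenspace_def)
  qed
  ultimately show ?thesis by blast
qed

lemma lf_axis: "lf (axis i c) x = c * x$i"
proof -
  have "lf (axis i c) x = (\<Sum>j\<in>UNIV. if j = i then c * x$i else 0)"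
    unfolding lf_def by (rule sum.cong) (auto simp: axis_def)
  thus ?thesis by simp
qed

lemma lf_diff1: "lf (a - b) y = lf a y - lf b y"
  by (simp add: lf_def algebra_simps sum_subtractf)

lemma lf_axis2: "lf x (axis i c) = c * x$i"
  using lf_axis lf_comm by metis

lemma mat_eq_lf: assumes "\<forall>y z. lf y (A *v z) = lf y (B *v z)" shows "A = (B::'a::field^'n^'n)"
proof -
  have "A *v z = B *v z" for z
  proof (subst vec_eq_iff, intro allI)
    fix i
    have "(A *v z)$i = lf (axis i 1) (A *v z)" by (simp add: lf_axis)
    also have "\<dots> = lf (axis i 1) (B *v z)" using assms by blast
    also have "\<dots> = (B *v z)$i" by (simp add: lf_axis)
    finally show "(A *v z)$i = (B *v z)$i" .
  qed
  thus ?thesis by (simp add: matrix_eq)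
qed

lemma tau_inv: assumes "lf f v = 0" shows "tau (-t) v f ** tau t v f = mat 1"
proof -
  have "(tau (-t) v f ** tau t v f) *v y = mat 1 *v y" for y
    unfolding matrix_vector_mul_assoc[symmetric] tau_apply
    by (simp add: lf_add2 lf_scale2 assms algebra_simps)
  thus ?thesis by (simp add: matrix_eq)
qed

lemma tau_invertible: "lf f v = 0 \<Longrightarrow> invertible (tau t v f)"
  using tau_inv invertible_left_inverse by blast

lemma Htau_GL:
  assumes inf: "infinite (UNIV::'a::field set)"
  shows "\<forall>x S. x \<noteq> 0 \<longrightarrow> finite S \<longrightarrow> (\<forall>s\<in>S. vec.subspace s \<and> s \<noteq> UNIV) \<longrightarrow> (\<exists>s\<in>S. x \<in> s)
        \<longrightarrow> (\<exists>v f. (\<forall>s\<in>S. v \<notin> s) \<and> lf f x \<noteq> 0 \<and> (\<forall>t. tau t v f \<in> {g::'a^'n^'n. invertible g}))"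
proof (intro allI impI)
  fix x :: "'a^'n" and S assume x: "x \<noteq> 0" and fS: "finite S" and sS: "\<forall>s\<in>S. vec.subspace s \<and> s \<noteq> UNIV"
    and xS: "\<exists>s\<in>S. x \<in> s"
  obtain v where v: "\<forall>s\<in>S. v \<notin> s" using avoid_union[OF inf fS sS] by blast
  obtain s0 where s0: "s0 \<in> S" "x \<in> s0" using xS by blast
  have vs0: "v \<notin> s0" using v s0 by auto
  have sub0: "vec.subspace s0" using sS s0 by auto
  have "v \<noteq> 0" using vs0 vec.subspace_0[OF sub0] by auto
  then obtain k where k: "v$k \<noteq> 0" by (auto simp: vec_eq_iff)
  define f where "f i = axis i 1 - (v$i / v$k) *s axis k (1::'a)" for i
  have fx: "lf (f i) y = y$i - (v$i / v$k) * y$k" for i y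
    unfolding f_def lf_diff1 lf_scale1 lf_axis by simp
  have fv: "lf (f i) v = 0" for i
    using k unfolding fx by simp
  have "\<exists>i. lf (f i) x \<noteq> 0"
  proof (rule ccontr)
    assume "\<not> ?thesis"
    hence "lf (f i) x = 0" for i by blast
    hence e: "x$i = (v$i / v$k) * x$k" for i unfolding fx by (metis eq_iff_diff_eq_0)
    define c where "c = x$k / v$k"
    have xc: "x = c *s v"
    proof (subst vec_eq_iff, intro allI)
      fix i
      have "(c *s v)$i = x$k / v$k * v$i" by (simp add: c_def)
      also have "\<dots> = x$i" using e[of i] by (simp add: field_simps)
      finally show "x$i = (c *s v)$i" by simp
    qed
    have "c \<noteq> 0" using x xc by auto
    hence "v = (1 / c) *s x" using xc by (simp add: vector_smult_assoc)
    hence "v \<in> s0" using s0 sub0 vec.subspace_scale by metis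
    thus False using vs0 by simp
  qed
  then obtain i where i: "lf (f i) x \<noteq> 0" by blast
  show "\<exists>v f. (\<forall>s\<in>S. v \<notin> s) \<and> lf f x \<noteq> 0 \<and> (\<forall>t. tau t v f \<in> {g::'a^'n^'n. invertible g})"
    using v i tau_invertible[OF fv] by blast
qed

lemma dsum_alt:
  assumes "finite A" "\<forall>i j. g i j = - g j i" "\<forall>i. g i i = (0::'a::comm_ring_1)"
  shows "(\<Sum>i\<in>A. \<Sum>j\<in>A. g i j) = 0"
  using assms(1)
proof (induction A rule: finite_induct)
  case empty thus ?case by simp
next
  case (insert a A)
  have "(\<Sum>i\<in>insert a A. \<Sum>j\<in>insert a A. g i j)
      = (g a a + (\<Sum>j\<in>A. g a j)) + (\<Sum>i\<in>A. g i a + (\<Sum>j\<in>A. g i j))"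
    using insert(1,2) by simp
  also have "\<dots> = (\<Sum>j\<in>A. g a j + g j a) + (\<Sum>i\<in>A. \<Sum>j\<in>A. g i j)"
    using assms(3) by (simp add: sum.distrib)
  also have "\<dots> = 0" using insert(3) by (simp add: sum.neutral assms(2)[rule_format, of a])
  finally show ?case .
qed

lemma alt_entry: assumes "alternating_nondeg J" shows "J$j$i = - J$i$j" "J$i$i = 0"
proof -
  have "transpose J = - J" using assms by (simp add: alternating_nondeg_def)
  hence "(transpose J)$i$j = (- J)$i$j" by simp
  thus "J$j$i = - J$i$j" by (simp add: transpose_def)
  show "J$i$i = 0" using assms by (simp add: alternating_nondeg_def)
qed

lemma alt_zero: assumes "alternating_nondeg J" shows "lf v (J *v v) = 0"
proof -
  have "lf v (J *v v) = (\<Sum>i\<in>UNIV. \<Sum>j\<in>UNIV. v$i * J$i$j * v$j)"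
    by (simp add: lf_def matrix_vector_mult_def sum_distrib_left mult_ac)
  also have "\<dots> = 0"
  proof (rule dsum_alt)
    show "\<forall>i j. v$i * J$i$j * v$j = - (v$j * J$j$i * v$i)"
    proof (intro allI)
      fix i j
      have "J$j$i = - J$i$j" by (rule alt_entry[OF assms])
      thus "v$i * J$i$j * v$j = - (v$j * J$j$i * v$i)" by (simp add: mult_ac)
    qed
    show "\<forall>i. v$i * J$i$i * v$i = 0" using alt_entry(2)[OF assms] by simp
  qed simp
  finally show ?thesis .
qed

lemma neg_mv: "(- J) *v a = - (J *v (a::'a::comm_ring_1^'n))"
  by (simp add: vec_eq_iff matrix_vector_mult_def sum_negf)

lemma lf_neg1: "lf (- x) b = - lf x b"
  by (simp add: lf_def sum_negf)

lemma lf_neg2: "lf b (- x) = - lf b x"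
  by (simp add: lf_def sum_negf)

lemma alt_antisym: assumes "alternating_nondeg J" shows "lf a (J *v b) = - lf b (J *v a)"
proof -
  have tJ: "transpose J = - J" using assms by (simp add: alternating_nondeg_def)
  have "lf a (J *v b) = lf a (transpose (transpose J) *v b)" by simp
  also have "\<dots> = lf (transpose J *v a) b" by (rule lf_transpose)
  also have "\<dots> = - lf b (J *v a)" by (simp add: tJ neg_mv lf_neg1 lf_comm[of "J *v a" b])
  finally show ?thesis .
qed

lemma Sp_invertible: assumes "alternating_nondeg J" "A \<in> Sp_group J" shows "invertible A"
proof -
  have "det (transpose A ** J ** A) = det J" using assms(2) by (simp add: Sp_group_def)
  hence "det A * det J * det A = det J" by (simp add: det_mul)
  moreover have "det J \<noteq> 0" using assms(1) by (simp add: alternating_nondeg_def)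
  ultimately have "det A \<noteq> 0" by auto
  thus ?thesis by (simp add: invertible_det_nz)
qed

lemma Sp_one: "mat 1 \<in> Sp_group J"
  by (simp add: Sp_group_def)

lemma Sp_mul: assumes "A \<in> Sp_group J" "B \<in> Sp_group J" shows "A ** B \<in> Sp_group J"
proof -
  have "transpose (A ** B) ** J ** (A ** B) = transpose B ** (transpose A ** J ** A) ** B"
    by (simp add: matrix_transpose_mul matrix_mul_assoc)
  also have "\<dots> = J" using assms by (simp add: Sp_group_def)
  finally show ?thesis by (simp add: Sp_group_def)
qed

lemma tau_Sp: assumes J: "alternating_nondeg J" shows "tau t v (J *v v) \<in> Sp_group J"
proof -
  let ?T = "tau t v (J *v v)"
  have "lf y ((transpose ?T ** J ** ?T) *v z) = lf y (J *v z)" for y z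
  proof -
    have "(transpose ?T ** J ** ?T) *v z = transpose ?T *v (J *v (?T *v z))"
      by (simp only: matrix_vector_mul_assoc matrix_mul_assoc)
    hence "lf y ((transpose ?T ** J ** ?T) *v z) = lf (?T *v y) (J *v (?T *v z))"
      by (simp only: lf_transpose)
    also have "\<dots> = lf y (J *v z) + (t * lf (J *v v) z) * lf y (J *v v)
        + (t * lf (J *v v) y) * lf v (J *v z) + (t * lf (J *v v) y) * (t * lf (J *v v) z) * lf v (J *v v)"
      unfolding tau_apply
      by (simp add: matrix_vector_right_distrib vector_scalar_commute lf_add1 lf_add2 lf_scale1 lf_scale2 algebra_simps)
    also have "\<dots> = lf y (J *v z)"
      using alt_zero[OF J, of v] alt_antisym[OF J, of v z] lf_comm[of "J *v v" z] lf_comm[of "J *v v" y]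
      by (simp add: algebra_simps)
    finally show ?thesis .
  qed
  hence "transpose ?T ** J ** ?T = J" by (intro mat_eq_lf) blast
  thus ?thesis by (simp add: Sp_group_def)
qed

lemma Htau_Sp:
  assumes inf: "infinite (UNIV::'a::field set)" and J: "alternating_nondeg (J::'a^'n^'n)"
  shows "\<forall>x S. x \<noteq> 0 \<longrightarrow> finite S \<longrightarrow> (\<forall>s\<in>S. vec.subspace s \<and> s \<noteq> UNIV) \<longrightarrow> (\<exists>s\<in>S. x \<in> s)
        \<longrightarrow> (\<exists>v f. (\<forall>s\<in>S. v \<notin> s) \<and> lf f x \<noteq> 0 \<and> (\<forall>t. tau t v f \<in> Sp_group J))"
proof (intro allI impI)
  fix x :: "'a^'n" and S :: "('a^'n) set set" assume x: "x \<noteq> 0" and fS: "finite S" and sS: "\<forall>s\<in>S. vec.subspace s \<and> s \<noteq> UNIV"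
  define a where "a = transpose J *v x"
  have dJ: "det J \<noteq> 0" using J by (simp add: alternating_nondeg_def)
  hence "det (transpose J) \<noteq> 0" by simp
  hence "invertible (transpose J)" using invertible_det_nz by blast
  hence "inj ((*v) (transpose J))" by (rule inj_matrix_vector_mult)
  hence a0: "a \<noteq> 0" using x unfolding a_def by (metis injD matrix_vector_mult_0_right)
  then obtain i where i: "a$i \<noteq> 0" by (auto simp: vec_eq_iff)
  define Z where "Z = {v. lf a v = 0}"
  have Z: "vec.subspace Z" "Z \<noteq> UNIV"
  proof -
    show "vec.subspace Z" unfolding Z_def vec.subspace_def by (auto simp: lf_add2 lf_scale2)
    have "axis i 1 \<notin> Z" using i by (simp add: Z_def lf_axis2)
    thus "Z \<noteq> UNIV" by auto
  qed
  obtain v where v: "\<forall>s\<in>insert Z S. v \<notin> s" using avoid_union[OF inf, of "insert Z S"] fS sS Z by auto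
  have "lf (J *v v) x = lf a v"
    using lf_transpose[of x "transpose J" v] lf_comm[of "J *v v" x] by (simp add: a_def)
  also have "\<dots> \<noteq> 0" using v by (auto simp: Z_def)
  finally show "\<exists>v f. (\<forall>s\<in>S. v \<notin> s) \<and> lf f x \<noteq> 0 \<and> (\<forall>t. tau t v f \<in> Sp_group J)"
    using v tau_Sp[OF J] by blast
qed

lemma mat_scale_apply: "mat s *v y = s *s (y::'a::field^'n)"
proof -
  have "(\<Sum>j\<in>UNIV. (if i = j then s else 0) * y$j) = s * y$i" for i
  proof -
    have "(\<Sum>j\<in>UNIV. (if i = j then s else 0) * y$j) = (\<Sum>j\<in>UNIV. if i = j then s * y$j else 0)"
      by (rule sum.cong) auto
    thus ?thesis by simp
  qed
  thus ?thesis by (simp add: vec_eq_iff matrix_vector_mult_def mat_def)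
qed

lemma SL_scale:
  assumes "invertible (g::'a::alg_closed_field^'n^'n)"
  shows "\<exists>g'. g' \<in> SL_group \<and> invertible g' \<and> (\<forall>U. vec.subspace U \<longrightarrow> img g' U = img g U)"
proof -
  have dg: "det g \<noteq> 0" using assms by (simp add: invertible_det_nz)
  obtain s :: 'a where s: "s ^ CARD('n) = inverse (det g)"
    using nth_root_exists[of "CARD('n)" "inverse (det g)"] by auto
  have s0: "s \<noteq> 0" using s dg by (metis inverse_nonzero_iff_nonzero power_0_left zero_less_card_finite less_not_refl)
  define g' where "g' = mat s ** g"
  have "det (mat s :: 'a^'n^'n) = s ^ CARD('n)"
    by (subst det_diagonal) (auto simp: mat_def)
  hence dg': "det g' = 1" using s dg by (simp add: g'_def det_mul)
  have "img g' U = img g U" if U: "vec.subspace U" for U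
  proof -
    have sub: "vec.subspace (img g U)" by (rule subspace_img[OF U])
    have "img g' U = img (mat s) (img g U)" unfolding g'_def by (rule img_comp)
    also have "\<dots> = img g U"
    proof
      show "img (mat s) (img g U) \<subseteq> img g U"
        using vec.subspace_scale[OF sub] by (auto simp: img_def[of "mat s"] mat_scale_apply)
      show "img g U \<subseteq> img (mat s) (img g U)"
      proof
        fix y assume y: "y \<in> img g U"
        have "y = mat s *v ((1/s) *s y)" using s0 by (simp add: mat_scale_apply vector_smult_assoc)
        moreover have "(1/s) *s y \<in> img g U" using vec.subspace_scale[OF sub y] .
        ultimately show "y \<in> img (mat s) (img g U)" unfolding img_def[of "mat s"] by blast
      qed
    qed
    finally show ?thesis .
  qed
  moreover have "g' \<in> SL_group" using dg' by (simp add: SL_group_def)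
  moreover have "invertible g'" using dg' by (simp add: invertible_det_nz)
  ultimately show ?thesis by blast
qed

lemma subspace_eig: "vec.subspace (eigenspace A l)"
  unfolding vec.subspace_def eigenspace_def
  by (auto simp: matrix_vector_right_distrib vector_scalar_commute vector_add_ldistrib vector_smult_assoc mult.commute)

lemma dim_single: "v \<noteq> 0 \<Longrightarrow> vec.dim {v::'a::field^'n} = 1"
  by (simp add: vec.dim_insert vec.span_empty)

lemma dim_Icap_lower:
  fixes E :: "nat \<Rightarrow> ('a::field^'n) set"
  assumes "\<forall>j<e. vec.subspace (E j)"
  shows "int (vec.dim {x. \<forall>j<e. x \<in> E j}) \<ge> (\<Sum>j<e. int (vec.dim (E j))) - int CARD('n) * (int e - 1)"
  using assms
proof (induction e)
  case 0 thus ?case by (simp add: card_cart_basis)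
next
  case (Suc e)
  define I where "I = {x. \<forall>j<e. x \<in> E j}"
  have sI: "vec.subspace I" unfolding I_def using Suc.prems by (intro subspace_Icap) auto
  have sE: "vec.subspace (E e)" using Suc.prems by auto
  have eq: "{x. \<forall>j<Suc e. x \<in> E j} = I \<inter> E e" by (auto simp: I_def less_Suc_eq)
  have "vec.dim (ssum I (E e)) + vec.dim (I \<inter> E e) = vec.dim I + vec.dim (E e)"
    by (rule dim_ssum_int[OF sI sE])
  moreover have "vec.dim (ssum I (E e)) \<le> CARD('n)" by (rule dim_le_n)
  moreover have "int (vec.dim I) \<ge> (\<Sum>j<e. int (vec.dim (E j))) - int CARD('n) * (int e - 1)"
    using Suc by (simp add: I_def)
  ultimately show ?case unfolding eq by (simp add: algebra_simps)
qed

lemma line_fixed: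
  assumes "invertible (x::'a::field^'n^'n)" "x *v v = l *s v" "v \<noteq> 0"
  shows "fixes_subspace x (vec.span {v})"
proof -
  have l0: "l \<noteq> 0"
  proof
    assume "l = 0"
    hence "x *v v = x *v 0" using assms(2) by simp
    thus False using inj_matrix_vector_mult[OF assms(1)] assms(3) by (meson injD)
  qed
  have "(\<lambda>y. x *v y) ` range (\<lambda>k. k *s v) = range (\<lambda>k. k *s v)"
  proof
    show "(\<lambda>y. x *v y) ` range (\<lambda>k. k *s v) \<subseteq> range (\<lambda>k. k *s v)"
      using assms(2) by (auto simp: vector_scalar_commute vector_smult_assoc)
    show "range (\<lambda>k. k *s v) \<subseteq> (\<lambda>y. x *v y) ` range (\<lambda>k. k *s v)"
    proof
      fix z assume "z \<in> range (\<lambda>k. k *s v)"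
      then obtain k where k: "z = k *s v" by auto
      have "x *v ((k / l) *s v) = z" using assms(2) l0 k by (simp add: vector_scalar_commute vector_smult_assoc)
      thus "z \<in> (\<lambda>y. x *v y) ` range (\<lambda>k. k *s v)" by blast
    qed
  qed
  thus ?thesis by (simp add: fixes_subspace_def vec.span_singleton)
qed

lemma line_of_dim1:
  assumes "vec.subspace (L::('a::field^'n) set)" "vec.dim L = 1"
  shows "\<exists>v. v \<noteq> 0 \<and> L = vec.span {v}"
proof -
  have "\<not> L \<subseteq> {0}" using assms(2) vec.dim_eq_0[of L] by auto
  then obtain v where v: "v \<in> L" "v \<noteq> 0" by auto
  have "vec.span {v} \<subseteq> L" using v assms(1) by (simp add: vec.span_minimal)
  moreover have "vec.dim L \<le> vec.dim (vec.span {v})" using assms(2) dim_single[OF v(2)] by simp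
  ultimately have "vec.span {v} = L" using vec.subspace_dim_equal[OF vec.subspace_span assms(1)] by blast
  thus ?thesis using v by blast
qed

theorem lemma2p4:
  fixes G :: "('a::alg_closed_field ^'n ^'n) set"
    and e :: nat
    and c :: "nat \<Rightarrow> 'a ^'n ^'n"
  assumes G: "G = SL_group \<or> (\<exists>J. alternating_nondeg J \<and> G = Sp_group J)"
    and c: "\<forall>j<e. c j \<in> G"
  shows "(int (\<Sum>j<e. max_eigenspace_dim (c j)) \<le> int CARD('n) * (int e - 1)) \<longleftrightarrow>
         (\<exists>x :: nat \<Rightarrow> 'a ^'n ^'n. (\<forall>j<e. x j \<in> conj_class G (c j)) \<and>
            \<not> (\<exists>L. vec.subspace L \<and> vec.dim L = 1 \<and> (\<forall>j<e. fixes_subspace (x j) L)))"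
proof -
  have inf: "infinite (UNIV :: 'a set)" by (rule infinite_alg_closed)
  have Ginv: "\<forall>a\<in>G. invertible a"
    using G
  proof
    assume "G = SL_group" thus ?thesis by (simp add: SL_group_def invertible_det_nz)
  next
    assume "\<exists>J. alternating_nondeg J \<and> G = Sp_group J" thus ?thesis using Sp_invertible by blast
  qed
  define \<gamma> where "\<gamma> j = max_eigenspace_dim (c j)" for j
  have gfin: "finite {vec.dim (eigenspace A l) | l. True}" for A :: "'a^'n^'n"
    by (rule finite_subset[of _ "{..CARD('n)}"]) (auto simp: dim_le_n)
  have gle: "vec.dim (eigenspace (c j) l) \<le> \<gamma> j" for j l
    unfolding \<gamma>_def max_eigenspace_dim_def by (rule Max_ge[OF gfin]) blast
  have gatt: "\<exists>l. vec.dim (eigenspace (c j) l) = \<gamma> j" for j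
  proof -
    have "Max {vec.dim (eigenspace (c j) l) | l. True} \<in> {vec.dim (eigenspace (c j) l) | l. True}"
      by (rule Max_in[OF gfin]) auto
    thus ?thesis unfolding \<gamma>_def max_eigenspace_dim_def by auto
  qed
  have gn: "\<gamma> j \<le> CARD('n)" for j using gatt[of j] dim_le_n by metis
  have sumg: "(\<Sum>j<e. int (\<gamma> j)) = int (\<Sum>j<e. max_eigenspace_dim (c j))"
    by (simp add: \<gamma>_def)
  show ?thesis
  proof (rule iffI)
    assume LHS: "int (\<Sum>j<e. max_eigenspace_dim (c j)) \<le> int CARD('n) * (int e - 1)"
    define F where "F j = (\<lambda>l. eigenspace (c j) l) ` {l. eigenspace (c j) l \<noteq> {0}}" for j
    have finF: "\<forall>j. finite (F j)" unfolding F_def using finite_eigenvalues by blast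
    have subF: "\<forall>j. \<forall>U\<in>F j. vec.subspace U \<and> vec.dim U \<le> \<gamma> j" unfolding F_def using subspace_eig gle by blast
    have dn: "\<forall>j. \<gamma> j \<le> CARD('n)" using gn by blast
    have fromH: "\<exists>g. (\<forall>j<e. g j \<in> H \<and> invertible (g j)) \<and>
        (\<forall>U. (\<forall>j<e. U j \<in> F j) \<longrightarrow> {x. \<forall>j<e. x \<in> img (g j) (U j)} \<subseteq> {0})"
      if step: "\<forall>P. finite P \<longrightarrow> (\<forall>p\<in>P. vec.subspace (fst p) \<and> vec.subspace (snd p)) \<longrightarrow>
       (\<exists>g\<in>H. \<forall>p\<in>P. fst p \<inter> img g (snd p) = {0} \<or> ssum (fst p) (img g (snd p)) = UNIV)"
        and Hinv: "\<forall>a\<in>H. invertible a" for H :: "('a^'n^'n) set"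
    proof -
      obtain g where gH: "\<forall>j<e. g j \<in> H" and gb: "\<forall>U. (\<forall>j<e. U j \<in> F j) \<longrightarrow>
         int (vec.dim {x. \<forall>j<e. x \<in> img (g j) (U j)}) \<le> max 0 ((\<Sum>j<e. int (\<gamma> j)) - int CARD('n) * (int e - 1))"
        using core_lemma[OF step Hinv finF subF dn, of e] by (elim exE conjE)
      have m0: "max 0 ((\<Sum>j<e. int (\<gamma> j)) - int CARD('n) * (int e - 1)) = 0" using LHS sumg by simp
      have zU: "\<forall>U. (\<forall>j<e. U j \<in> F j) \<longrightarrow> {x. \<forall>j<e. x \<in> img (g j) (U j)} \<subseteq> {0}"
      proof (intro allI impI)
        fix U assume U: "\<forall>j<e. U j \<in> F j"
        have "int (vec.dim {x. \<forall>j<e. x \<in> img (g j) (U j)}) \<le> max 0 ((\<Sum>j<e. int (\<gamma> j)) - int CARD('n) * (int e - 1))"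
          using mp[OF spec[OF gb, of U] U] .
        hence "int (vec.dim {x. \<forall>j<e. x \<in> img (g j) (U j)}) \<le> 0" unfolding m0 .
        hence "vec.dim {x. \<forall>j<e. x \<in> img (g j) (U j)} = 0" by linarith
        thus "{x. \<forall>j<e. x \<in> img (g j) (U j)} \<subseteq> {0}" by (simp only: vec.dim_eq_0)
      qed
      have gHi: "\<forall>j<e. g j \<in> H \<and> invertible (g j)" using gH Hinv by blast
      show ?thesis by (rule exI[of _ g], rule conjI[OF gHi zU])
    qed
    have gen: "\<exists>g. (\<forall>j<e. g j \<in> G \<and> invertible (g j)) \<and>
        (\<forall>U. (\<forall>j<e. U j \<in> F j) \<longrightarrow> {x. \<forall>j<e. x \<in> img (g j) (U j)} \<subseteq> {0})"
      using G
    proof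
      assume GSL: "G = SL_group"
      have H1: "mat 1 \<in> {g::'a^'n^'n. invertible g}" by (simp add: invertible_det_nz)
      have Hmul: "\<forall>a\<in>{g::'a^'n^'n. invertible g}. \<forall>b\<in>{g. invertible g}. a ** b \<in> {g. invertible g}"
        by (auto intro: invertible_mult)
      have Hinv: "\<forall>a\<in>{g::'a^'n^'n. invertible g}. invertible a" by simp
      have stepGL: "\<forall>P. finite P \<longrightarrow> (\<forall>p\<in>P. vec.subspace (fst p) \<and> vec.subspace (snd p)) \<longrightarrow>
       (\<exists>g\<in>{g::'a^'n^'n. invertible g}. \<forall>p\<in>P. fst p \<inter> img g (snd p) = {0} \<or> ssum (fst p) (img g (snd p)) = UNIV)"
        using step_lemma[OF inf H1 Hmul Hinv Htau_GL[OF inf]] by blast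
      obtain g where g: "\<forall>j<e. g j \<in> {g::'a^'n^'n. invertible g} \<and> invertible (g j)"
        and gz: "\<forall>U. (\<forall>j<e. U j \<in> F j) \<longrightarrow> {x. \<forall>j<e. x \<in> img (g j) (U j)} \<subseteq> {0}"
        using fromH[OF stepGL Hinv] by (elim exE conjE)
      have "\<forall>j\<in>{..<e}. \<exists>g'. g' \<in> SL_group \<and> invertible g' \<and> (\<forall>U. vec.subspace U \<longrightarrow> img g' U = img (g j) U)"
        using g SL_scale by blast
      from bchoice[OF this] obtain g' where g': "\<forall>j\<in>{..<e}. g' j \<in> SL_group \<and> invertible (g' j) \<and>
          (\<forall>U. vec.subspace U \<longrightarrow> img (g' j) U = img (g j) U)" by (elim exE)
      have "{x. \<forall>j<e. x \<in> img (g' j) (U j)} \<subseteq> {0}" if U: "\<forall>j<e. U j \<in> F j" for U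
      proof -
        have eqj: "\<forall>j<e. img (g' j) (U j) = img (g j) (U j)"
        proof (intro allI impI)
          fix j assume j: "j < e"
          have "vec.subspace (U j)" using subF U j by blast
          thus "img (g' j) (U j) = img (g j) (U j)" using bspec[OF g', of j] j by simp
        qed
        have "{x. \<forall>j<e. x \<in> img (g' j) (U j)} = {x. \<forall>j<e. x \<in> img (g j) (U j)}"
          using eqj by auto
        thus ?thesis using gz U by simp
      qed
      hence zU: "\<forall>U. (\<forall>j<e. U j \<in> F j) \<longrightarrow> {x. \<forall>j<e. x \<in> img (g' j) (U j)} \<subseteq> {0}" by blast
      have gHi: "\<forall>j<e. g' j \<in> G \<and> invertible (g' j)" using g' GSL by auto
      show ?thesis by (rule exI[of _ g'], rule conjI[OF gHi zU])
    next
      assume "\<exists>J. alternating_nondeg J \<and> G = Sp_group J"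
      then obtain J where J: "alternating_nondeg J" "G = Sp_group J" by blast
      have Hmul: "\<forall>a\<in>Sp_group J. \<forall>b\<in>Sp_group J. a ** b \<in> Sp_group J" using Sp_mul by blast
      have Hinv: "\<forall>a\<in>Sp_group J. invertible a" using Sp_invertible[OF J(1)] by blast
      have stepSp: "\<forall>P. finite P \<longrightarrow> (\<forall>p\<in>P. vec.subspace (fst p) \<and> vec.subspace (snd p)) \<longrightarrow>
       (\<exists>g\<in>Sp_group J. \<forall>p\<in>P. fst p \<inter> img g (snd p) = {0} \<or> ssum (fst p) (img g (snd p)) = UNIV)"
        using step_lemma[OF inf Sp_one Hmul Hinv Htau_Sp[OF inf J(1)]] by blast
      show ?thesis using fromH[OF stepSp Hinv] J(2) by simp
    qed
    then obtain g where g: "\<forall>j<e. g j \<in> G \<and> invertible (g j)"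
      and gz: "\<forall>U. (\<forall>j<e. U j \<in> F j) \<longrightarrow> {x. \<forall>j<e. x \<in> img (g j) (U j)} \<subseteq> {0}"
      by (elim exE conjE)
    define x where "x j = g j ** c j ** matrix_inv (g j)" for j
    show "\<exists>x :: nat \<Rightarrow> 'a ^'n ^'n. (\<forall>j<e. x j \<in> conj_class G (c j)) \<and>
            \<not> (\<exists>L. vec.subspace L \<and> vec.dim L = 1 \<and> (\<forall>j<e. fixes_subspace (x j) L))"
    proof (intro exI conjI)
      show "\<forall>j<e. x j \<in> conj_class G (c j)" using g unfolding x_def conj_class_def by blast
      show "\<not> (\<exists>L. vec.subspace L \<and> vec.dim L = 1 \<and> (\<forall>j<e. fixes_subspace (x j) L))"
      proof
        assume "\<exists>L. vec.subspace L \<and> vec.dim L = 1 \<and> (\<forall>j<e. fixes_subspace (x j) L)"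
        then obtain L where L: "vec.subspace L" "vec.dim L = 1" "\<forall>j<e. fixes_subspace (x j) L" by blast
        obtain v where v: "v \<noteq> 0" "L = vec.span {v}" using line_of_dim1[OF L(1,2)] by blast
        have vL: "v \<in> L" using v(2) vec.span_base[of v "{v}"] by simp
        have "\<forall>j\<in>{..<e}. \<exists>m. x j *v v = m *s v"
        proof
          fix j assume j: "j \<in> {..<e}"
          have "x j *v v \<in> (\<lambda>y. x j *v y) ` L" using vL by blast
          hence "x j *v v \<in> L" using L(3) j by (simp add: fixes_subspace_def)
          thus "\<exists>m. x j *v v = m *s v" using v(2) by (auto simp: vec.span_singleton)
        qed
        from bchoice[OF this] obtain m where m: "\<forall>j\<in>{..<e}. x j *v v = m j *s v" by (elim exE)
        define U where "U j = eigenspace (c j) (m j)" for j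
        have vin: "\<forall>j<e. v \<in> img (g j) (U j)"
        proof (intro allI impI)
          fix j assume j: "j < e"
          have "v \<in> eigenspace (x j) (m j)" using m j by (simp add: eigenspace_def)
          thus "v \<in> img (g j) (U j)" unfolding U_def x_def using eigenspace_conj g j by metis
        qed
        have UF: "\<forall>j<e. U j \<in> F j"
        proof (intro allI impI)
          fix j assume j: "j < e"
          obtain w where w: "w \<in> U j" "v = g j *v w" using vin j unfolding img_def by blast
          have "w \<noteq> 0" using w v(1) by auto
          hence "U j \<noteq> {0}" using w(1) by blast
          thus "U j \<in> F j" unfolding F_def U_def by blast
        qed
        have "v \<in> {x. \<forall>j<e. x \<in> img (g j) (U j)}" using vin by blast
        thus False using gz UF v(1) by blast
      qed
    qed
  next
    assume RHS: "\<exists>x :: nat \<Rightarrow> 'a ^'n ^'n. (\<forall>j<e. x j \<in> conj_class G (c j)) \<and>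
            \<not> (\<exists>L. vec.subspace L \<and> vec.dim L = 1 \<and> (\<forall>j<e. fixes_subspace (x j) L))"
    then obtain x where xc: "\<forall>j<e. x j \<in> conj_class G (c j)"
      and nL: "\<not> (\<exists>L. vec.subspace L \<and> vec.dim L = 1 \<and> (\<forall>j<e. fixes_subspace (x j) L))"
      by (elim exE conjE)
    show "int (\<Sum>j<e. max_eigenspace_dim (c j)) \<le> int CARD('n) * (int e - 1)"
    proof (rule ccontr)
      assume "\<not> int (\<Sum>j<e. max_eigenspace_dim (c j)) \<le> int CARD('n) * (int e - 1)"
      hence big: "(\<Sum>j<e. int (\<gamma> j)) > int CARD('n) * (int e - 1)" using sumg by simp
      have "\<forall>j\<in>{..<e}. \<exists>h. h \<in> G \<and> x j = h ** c j ** matrix_inv h"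
        using xc unfolding conj_class_def by blast
      from bchoice[OF this] obtain h where h: "\<forall>j\<in>{..<e}. h j \<in> G \<and> x j = h j ** c j ** matrix_inv (h j)"
        by (elim exE)
      obtain l where l: "\<forall>j. vec.dim (eigenspace (c j) (l j)) = \<gamma> j" using gatt by metis
      define E where "E j = eigenspace (x j) (l j)" for j
      have Ej: "E j = img (h j) (eigenspace (c j) (l j))" if "j < e" for j
      proof -
        have hj: "h j \<in> G" "x j = h j ** c j ** matrix_inv (h j)" using h that by auto
        have "invertible (h j)" using hj(1) Ginv by blast
        thus ?thesis unfolding E_def hj(2) by (rule eigenspace_conj)
      qed
      have sE: "\<forall>j<e. vec.subspace (E j)" unfolding E_def using subspace_eig by blast
      have dE: "vec.dim (E j) = \<gamma> j" if "j < e" for j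
      proof -
        have "invertible (h j)" using h that Ginv by auto
        thus ?thesis unfolding Ej[OF that] using dim_img l by metis
      qed
      have "(\<Sum>j<e. int (vec.dim (E j))) = (\<Sum>j<e. int (\<gamma> j))" by (rule sum.cong) (auto simp: dE)
      hence "int (vec.dim {v. \<forall>j<e. v \<in> E j}) > 0" using dim_Icap_lower[OF sE] big by linarith
      hence "vec.dim {v. \<forall>j<e. v \<in> E j} \<noteq> 0" by linarith
      note dn0 = this
      have "\<not> {v. \<forall>j<e. v \<in> E j} \<subseteq> {0}"
      proof
        assume "{v. \<forall>j<e. v \<in> E j} \<subseteq> {0}"
        hence "vec.dim {v. \<forall>j<e. v \<in> E j} = 0" by (rule vec.dim_eq_0[THEN iffD2])
        thus False using dn0 by contradiction
      qed
      then obtain v where v: "\<forall>j<e. v \<in> E j" "v \<noteq> 0" by blast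
      have "vec.subspace (vec.span {v})" by (rule vec.subspace_span)
      moreover have "vec.dim (vec.span {v}) = 1" using dim_single[OF v(2)] by simp
      moreover have "\<forall>j<e. fixes_subspace (x j) (vec.span {v})"
      proof (intro allI impI)
        fix j assume j: "j < e"
        have hj: "h j \<in> G" "x j = h j ** c j ** matrix_inv (h j)" using h j by auto
        have ih: "invertible (h j)" using hj(1) Ginv by blast
        have "invertible (matrix_inv (h j))" using inv_props[OF ih] unfolding invertible_def by blast
        moreover have "invertible (c j)" using c j Ginv by blast
        ultimately have "invertible (x j)" using hj(2) ih by (simp add: invertible_mult)
        moreover have "x j *v v = l j *s v" using v(1) j by (simp add: E_def eigenspace_def)
        ultimately show "fixes_subspace (x j) (vec.span {v})" using line_fixed v(2) by blast
      qed
      ultimately show False using nL by blast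
    qed
  qed
qed

end
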